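(* Let $p$ be a prime and let $k,N$ be positive integers. For any positive integer $n\geq N$, \[ \sum_{i=0}^{\varphi(p^N)-1}B^{(-k)}_{n+i}\equiv \sum_{i=0}^{\varphi(p^N)-1}B^{(-n-i)}_{k}\equiv 0\pmod{p^N}. \]
   Context: For any integer $k$, let $\mathrm{Li}_k(t)=\sum_{n=1}^{\infty} t^n/n^k$. The poly-Bernoulli numbers $B^{(k)}_n$ ($n\ge 0$) are defined by $\frac{\mathrm{Li}_k(1-e^{-t})}{1-e^{-t}}=\sum_{n=0}^{\infty}B^{(k)}_n\frac{t^n}{n!}$. For negative upper index these are integers. $\varphi$ denotes Euler's totient function, so $\varphi(p^N)=p^{N-1}(p-1)$. *)

theory Defs
  imports "HOL-Computational_Algebra.Formal_Power_Series" "HOL-Number_Theory.Number_Theory"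
begin

text \<open>Li_{-k}(x) = sum_{n>=1} n^k x^n as a formal power series in x (k :: nat, index -k).\<close>
definition polylog_neg_fps :: "nat \<Rightarrow> rat fps" where
  "polylog_neg_fps k = Abs_fps (\<lambda>n. if n = 0 then 0 else of_nat n ^ k)"

definition one_minus_exp_neg :: "rat fps" where
  "one_minus_exp_neg = 1 - fps_exp (-1)"

definition poly_bernoulli_gf :: "nat \<Rightarrow> rat fps" where
  "poly_bernoulli_gf k = fps_compose (polylog_neg_fps k) one_minus_exp_neg / one_minus_exp_neg"

text \<open>poly_bernoulli_neg k n = B_n^{(-k)}.\<close>
definition poly_bernoulli_neg :: "nat \<Rightarrow> nat \<Rightarrow> rat" where
  "poly_bernoulli_neg k n = fact n * fps_nth (poly_bernoulli_gf k) n"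

end

theory Submission
  imports Defs "HOL-Number_Theory.Number_Theory"
begin

unbundle fps_syntax

fun sc :: "nat \<Rightarrow> nat \<Rightarrow> int" where
  "sc 0 m = (if m = 0 then 1 else 0)"
| "sc (Suc k) 0 = 0"
| "sc (Suc k) (Suc m) = int (Suc m) * (sc k m - sc k (Suc m))"

definition Mk :: "nat \<Rightarrow> rat fps" where "Mk k = Abs_fps (\<lambda>n. of_nat (n+1) ^ k)"
definition Gk :: "nat \<Rightarrow> rat fps" where "Gk k = Mk k oo one_minus_exp_neg"

lemma x0[simp]: "one_minus_exp_neg $ 0 = 0"
  by (simp add: one_minus_exp_neg_def)

lemma x_ne: "one_minus_exp_neg \<noteq> 0"
proof
  assume "one_minus_exp_neg = 0"
  then have "one_minus_exp_neg $ 1 = 0" by simp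
  then show False by (simp add: one_minus_exp_neg_def)
qed

lemma dx: "fps_deriv one_minus_exp_neg = 1 - one_minus_exp_neg"
proof -
  have "fps_const (-1::rat) = - 1" by (metis fps_const_1_eq_1 fps_const_neg)
  then show ?thesis by (simp add: one_minus_exp_neg_def)
qed

lemma L_eq: "polylog_neg_fps k = fps_X * Mk k"
  by (simp add: fps_eq_iff polylog_neg_fps_def Mk_def)

lemma gf_eq: "poly_bernoulli_gf k = Gk k"
proof -
  have "poly_bernoulli_gf k = (one_minus_exp_neg * Gk k) / one_minus_exp_neg"
    unfolding poly_bernoulli_gf_def L_eq Gk_def
    by (simp add: fps_compose_mult_distrib)
  also have "\<dots> = Gk k" using x_ne by simp
  finally show ?thesis .
qed

lemma xpow: "fact n * (one_minus_exp_neg ^ m $ n) = of_int (sc n m)"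
proof (induction n arbitrary: m)
  case 0
  then show ?case by (cases m) auto
next
  case (Suc n)
  show ?case
  proof (cases m)
    case 0
    then show ?thesis by simp
  next
    case (Suc j)
    have d: "fps_deriv (one_minus_exp_neg ^ Suc j) = fps_const (of_nat (Suc j)) * (one_minus_exp_neg ^ j - one_minus_exp_neg ^ Suc j)"
    proof -
      have "fps_deriv (one_minus_exp_neg ^ Suc j) = of_nat (Suc j) * fps_deriv one_minus_exp_neg * one_minus_exp_neg ^ j"
        by (simp only: fps_deriv_power' diff_Suc_1)
      also have "\<dots> = of_nat (Suc j) * (one_minus_exp_neg ^ j - one_minus_exp_neg ^ Suc j)"
        unfolding dx by (simp only: power_Suc right_diff_distrib mult.assoc left_diff_distrib mult_1_left)
      finally show ?thesis by (simp only: fps_of_nat)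
    qed
    have "fact (Suc n) * (one_minus_exp_neg ^ m $ Suc n) = fact n * (fps_deriv (one_minus_exp_neg ^ m) $ n)"
      by (simp add: algebra_simps)
    also have "\<dots> = of_nat (Suc j) * (fact n * (one_minus_exp_neg ^ j $ n) - fact n * (one_minus_exp_neg ^ Suc j $ n))"
      unfolding Suc d fps_mult_left_const_nth by (simp add: algebra_simps)
    also have "\<dots> = of_int (sc (Suc n) m)" using Suc.IH[of j] Suc.IH[of "Suc j"] Suc by (simp del: power_Suc add: algebra_simps)
    finally show ?thesis .
  qed
qed

lemma formula1: "poly_bernoulli_neg k n = (\<Sum>i\<le>n. of_nat (i+1) ^ k * of_int (sc n i))"
proof -
  have "poly_bernoulli_neg k n = (\<Sum>i\<le>n. of_nat (i+1) ^ k * (fact n * (one_minus_exp_neg ^ i $ n)))"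
    unfolding poly_bernoulli_neg_def gf_eq Gk_def fps_compose_nth
    by (simp add: Mk_def sum_distrib_left atLeast0AtMost algebra_simps)
  then show ?thesis by (simp add: xpow)
qed

lemma Mk_rec: "Mk (Suc k) = Mk k + fps_X * fps_deriv (Mk k)"
  by (auto simp: fps_eq_iff Mk_def fps_deriv_def algebra_simps)

lemma ex_inv: "fps_exp (-1::rat) * fps_exp 1 = 1"
  by (simp flip: fps_exp_add_mult)

lemma one_minus_x: "1 - one_minus_exp_neg = fps_exp (-1)"
  by (simp add: one_minus_exp_neg_def)

lemma G0: "Gk 0 = fps_exp 1"
proof -
  have "(1 - fps_X) * Mk 0 = 1"
    by (auto simp: fps_eq_iff Mk_def algebra_simps)
  then have "((1 - fps_X) * Mk 0) oo one_minus_exp_neg = 1" by simp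
  then have "fps_exp (-1) * Gk 0 = 1"
    by (simp add: fps_compose_mult_distrib fps_compose_sub_distrib one_minus_x Gk_def)
  then have "fps_exp (-1) * Gk 0 = fps_exp (-1) * fps_exp 1" by (simp add: ex_inv)
  moreover have "fps_exp (-1::rat) \<noteq> 0"
  proof
    assume "fps_exp (-1::rat) = 0"
    then have "fps_exp (-1::rat) $ 0 = 0" by simp
    then show False by simp
  qed
  ultimately show ?thesis by simp
qed

lemma Gk_rec: "Gk (Suc k) = Gk k + (fps_exp 1 - 1) * fps_deriv (Gk k)"
proof -
  have d: "fps_deriv (Gk k) = (fps_deriv (Mk k) oo one_minus_exp_neg) * fps_exp (-1)"
    unfolding Gk_def by (simp add: fps_compose_deriv dx one_minus_x)
  have e: "(fps_exp 1 - 1) * fps_exp (-1) = (one_minus_exp_neg :: rat fps)"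
    by (simp add: algebra_simps one_minus_exp_neg_def flip: fps_exp_add_mult)
  have "Gk (Suc k) = Gk k + one_minus_exp_neg * (fps_deriv (Mk k) oo one_minus_exp_neg)"
    unfolding Gk_def Mk_rec by (simp add: fps_compose_add_distrib fps_compose_mult_distrib)
  also have "\<dots> = Gk k + (fps_exp 1 - 1) * fps_deriv (Gk k)"
    unfolding d e[symmetric] by (simp add: algebra_simps)
  finally show ?thesis .
qed

lemma sc_zero: "k < m \<Longrightarrow> sc k m = 0"
proof (induction k arbitrary: m)
  case 0
  then show ?case by simp
next
  case (Suc k)
  then obtain j where "m = Suc j" by (cases m) auto
  with Suc show ?case by simp
qed

lemma Gk_sum: "Gk k = (\<Sum>m\<le>k. fps_const (of_int (sc k m)) * fps_exp (of_nat (Suc m)))"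
proof (induction k)
  case 0
  then show ?case by (simp add: G0)
next
  case (Suc k)
  define f where "f m = fps_const (rat_of_int (sc k m))" for m
  define E where "E m = fps_exp (rat_of_nat m)" for m
  define g where "g m = fps_const (of_nat m) * f m * E (Suc m)" for m
  have dE: "fps_deriv (E m) = fps_const (of_nat m) * E m" for m
    by (simp add: E_def)
  have eE: "(fps_exp 1 - 1) * E m = E (Suc m) - E m" for m
    by (simp add: E_def algebra_simps flip: fps_exp_add_mult)
  have IH: "Gk k = (\<Sum>m\<le>k. f m * E (Suc m))" using Suc.IH by (simp add: f_def E_def)
  have "Gk (Suc k) = (\<Sum>m\<le>k. f m * E (Suc m)) + (\<Sum>m\<le>k. fps_const (of_nat (Suc m)) * f m * (E (Suc (Suc m)) - E (Suc m)))"
  proof -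
    have t: "(fps_exp 1 - 1) * fps_deriv (f m * E (Suc m)) = fps_const (of_nat (Suc m)) * f m * (E (Suc (Suc m)) - E (Suc m))" for m
    proof -
      have "fps_deriv (f m * E (Suc m)) = fps_const (of_nat (Suc m)) * f m * E (Suc m)"
        by (simp add: f_def dE mult.commute mult.left_commute del: of_nat_Suc)
      then have "(fps_exp 1 - 1) * fps_deriv (f m * E (Suc m)) = fps_const (of_nat (Suc m)) * f m * ((fps_exp 1 - 1) * E (Suc m))"
        by (simp only: mult.commute mult.left_commute)
      then show ?thesis by (simp only: eE)
    qed
    show ?thesis
      unfolding Gk_rec IH fps_deriv_sum sum_distrib_left t ..
  qed
  also have "\<dots> = (\<Sum>m\<le>k. fps_const (of_nat (Suc m)) * f m * E (Suc (Suc m))) - (\<Sum>m\<le>k. g m)"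
    unfolding g_def by (simp add: algebra_simps sum.distrib sum_subtractf flip: fps_const_add)
  also have "(\<Sum>m\<le>k. g m) = (\<Sum>m\<le>k. g (Suc m))"
  proof -
    have "(\<Sum>m\<le>Suc k. g m) = (\<Sum>m\<le>k. g (Suc m))"
      unfolding sum.atMost_Suc_shift by (simp add: g_def)
    moreover have "g (Suc k) = 0" by (simp add: g_def f_def sc_zero)
    ultimately show ?thesis by simp
  qed
  also have "(\<Sum>m\<le>k. fps_const (of_nat (Suc m)) * f m * E (Suc (Suc m))) - (\<Sum>m\<le>k. g (Suc m))
     = (\<Sum>m\<le>k. fps_const (of_int (sc (Suc k) (Suc m))) * E (Suc (Suc m)))"
    unfolding sum_subtractf[symmetric]
  proof (rule sum.cong)
    fix m
    have "fps_const (of_int (sc (Suc k) (Suc m))) = fps_const (of_nat (Suc m)) * (f m - f (Suc m))"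
      by (simp only: sc.simps of_int_mult of_int_diff of_int_of_nat_eq f_def fps_const_mult fps_const_sub)
    then show "fps_const (of_nat (Suc m)) * f m * E (Suc (Suc m)) - g (Suc m) = fps_const (of_int (sc (Suc k) (Suc m))) * E (Suc (Suc m))"
      by (simp only: g_def right_diff_distrib left_diff_distrib mult.assoc)
  qed simp
  also have "\<dots> = (\<Sum>m\<le>Suc k. fps_const (of_int (sc (Suc k) m)) * fps_exp (of_nat (Suc m)))"
    unfolding sum.atMost_Suc_shift by (simp add: E_def)
  finally show ?case .
qed

lemma formula2: "poly_bernoulli_neg k n = (\<Sum>m\<le>k. of_int (sc k m) * of_nat (Suc m) ^ n)"
  unfolding poly_bernoulli_neg_def gf_eq Gk_sum fps_sum_nth
  by (simp add: sum_distrib_left)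



lemma geo_split: "(\<Sum>i<y*x. (a::int)^i) = (\<Sum>i<x. a^i) * (\<Sum>j<y. (a^x)^j)"
proof -
  have "(\<Sum>i<y*x. a^i) = (\<Sum>j<y. (\<Sum>i\<in>{j*x..<j*x+x}. a^i))"
    by (rule sum.nat_group[symmetric])
  also have "\<dots> = (\<Sum>j<y. (a^x)^j * (\<Sum>i<x. a^i))"
  proof (rule sum.cong)
    fix j
    have "(\<Sum>i\<in>{j*x..<j*x+x}. a^i) = (\<Sum>i<x. a^(j*x+i))"
      by (rule sum.reindex_bij_witness[where i="\<lambda>i. j*x+i" and j="\<lambda>i. i - j*x"]) auto
    also have "\<dots> = (a^x)^j * (\<Sum>i<x. a^i)"
      unfolding sum_distrib_left
      by (rule sum.cong) (simp_all add: power_add mult.commute flip: power_mult)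
    finally show "(\<Sum>i\<in>{j*x..<j*x+x}. a^i) = (a^x)^j * (\<Sum>i<x. a^i)" .
  qed simp
  finally show ?thesis by (metis (no_types, lifting) sum_distrib_right mult.commute sum.cong)
qed

lemma pps: assumes "[a = 1] (mod int p)" shows "int p ^ s dvd (\<Sum>i<p^s. a^i)"
proof (induction s)
  case 0
  then show ?case by simp
next
  case (Suc s)
  have "[(\<Sum>j<p. (a^(p^s))^j) = (\<Sum>j<p. 1)] (mod int p)"
  proof (rule cong_sum)
    fix j
    have "[a^(p^s) = 1^(p^s)] (mod int p)" by (rule cong_pow[OF assms])
    then have "[(a^(p^s))^j = 1^j] (mod int p)" by (intro cong_pow) simp
    then show "[(a^(p^s))^j = 1] (mod int p)" by simp
  qed
  then have "int p dvd (\<Sum>j<p. (a^(p^s))^j) - int p"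
    by (simp add: cong_iff_dvd_diff)
  then have "int p dvd (\<Sum>j<p. (a^(p^s))^j) - int p + int p"
    by (rule dvd_add) simp
  then have "int p dvd (\<Sum>j<p. (a^(p^s))^j)" by simp
  then have "int p ^ s * int p dvd (\<Sum>i<p^s. a^i) * (\<Sum>j<p. (a^(p^s))^j)"
    using Suc.IH by (rule mult_dvd_mono[rotated])
  moreover have "(\<Sum>i<p^Suc s. a^i) = (\<Sum>i<p^s. a^i) * (\<Sum>j<p. (a^(p^s))^j)"
    using geo_split[where y=p and x="p^s" and a=a] by (simp add: mult.commute)
  ultimately show ?case by (simp add: mult.commute)
qed

lemma W1:
  assumes "prime p" "N \<ge> 1" "[a = 1] (mod int p)"
  shows "int p ^ (N - 1) dvd (\<Sum>i<totient (p^N). a^i)"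
proof -
  have "totient (p^N) = (p - 1) * p^(N-1)"
    using totient_prime_power[of p N] assms by simp
  then have "(\<Sum>i<totient (p^N). a^i) = (\<Sum>i<p^(N-1). a^i) * (\<Sum>j<p-1. (a^(p^(N-1)))^j)"
    by (simp add: geo_split)
  then show ?thesis using pps[OF assms(3), of "N-1"] by simp
qed

lemma W2:
  assumes "prime p" "\<not> p dvd m" "\<not> p dvd Suc m"
  shows "int p ^ N dvd (\<Sum>i<totient (p^N). int (Suc m)^i)"
proof -
  have cop: "coprime (Suc m) (p^N)"
    using assms by (simp add: prime_imp_coprime coprime_commute)
  have "[Suc m ^ totient (p^N) = 1] (mod p^N)" by (rule euler_theorem[OF cop])
  then have "[int (Suc m) ^ totient (p^N) = 1] (mod int (p^N))"
    by (metis cong_int_iff of_nat_1 of_nat_power)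
  then have "int p ^ N dvd int (Suc m) ^ totient (p^N) - 1"
    by (simp add: cong_iff_dvd_diff)
  then have "int p ^ N dvd int m * (\<Sum>i<totient (p^N). int (Suc m)^i)"
    by (simp add: power_diff_1_eq)
  moreover have "coprime (int p ^ N) (int m)"
    using assms by (simp add: prime_imp_coprime)
  ultimately show ?thesis using coprime_dvd_mult_right_iff by blast
qed



lemma fact_dvd_sc: "(fact m :: int) dvd sc k m"
proof (induction k arbitrary: m)
  case 0
  then show ?case by simp
next
  case (Suc k)
  show ?case
  proof (cases m)
    case 0
    then show ?thesis by simp
  next
    case (Suc j)
    have "(fact (Suc j) :: int) = int (Suc j) * fact j" by simp
    moreover have "fact j dvd sc k j - sc k (Suc j)"
      using Suc.IH[of j] Suc.IH[of "Suc j"] by (simp add: dvd_diff dvd_trans[OF fact_dvd[of j "Suc j"]])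
    ultimately show ?thesis using Suc by simp
  qed
qed

lemma term_dvd:
  assumes p: "prime p" and k: "k \<ge> 1" and N: "N \<ge> 1" and n: "n \<ge> N"
  shows "int p ^ N dvd sc k m * (\<Sum>i<totient (p^N). int (Suc m)^(n+i))"
proof -
  have split: "(\<Sum>i<totient (p^N). int (Suc m)^(n+i)) = int (Suc m)^n * (\<Sum>i<totient (p^N). int (Suc m)^i)"
    by (simp add: power_add sum_distrib_left)
  show ?thesis
  proof (cases "m = 0")
    case True
    obtain k' where "k = Suc k'" using k by (cases k) auto
    then show ?thesis using True by simp
  next
    case m0: False
    show ?thesis
    proof (cases "p dvd Suc m")
      case True
      then have "int p dvd int (Suc m)" by (simp only: of_nat_dvd_iff)
      then have "int p ^ N dvd int (Suc m) ^ N" by (rule dvd_power_same)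
      also have "\<dots> dvd int (Suc m) ^ n" using n by (simp add: le_imp_power_dvd)
      finally show ?thesis unfolding split by simp
    next
      case nS: False
      show ?thesis
      proof (cases "p dvd m")
        case False
        with W2[OF p this nS, of N] show ?thesis unfolding split by simp
      next
        case True
        then have "p \<le> m" using m0 by (simp add: dvd_imp_le)
        then have "p dvd fact m"
          using prime_gt_0_nat[OF p] by (simp add: dvd_fact)
        then have "int p dvd fact m"
          by (metis of_nat_dvd_iff of_nat_fact)
        then have d1: "int p dvd sc k m" using fact_dvd_sc dvd_trans by blast
        have "[int (Suc m) = 1] (mod int p)"
          using True by (simp add: cong_iff_dvd_diff)
        from W1[OF p N this] have d2: "int p ^ (N - 1) dvd (\<Sum>i<totient (p^N). int (Suc m)^i)" .
        have "int p * int p ^ (N - 1) dvd sc k m * (\<Sum>i<totient (p^N). int (Suc m)^i)"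
          using d1 d2 by (rule mult_dvd_mono)
        moreover have "int p * int p ^ (N - 1) = int p ^ N" using N by (simp flip: power_Suc)
        ultimately show ?thesis unfolding split
          by (metis dvd_mult mult.left_commute)
      qed
    qed
  qed
qed

theorem theorem3p6:
  fixes p k N n :: nat
  assumes "prime p" and "k \<ge> 1" and "N \<ge> 1" and "n \<ge> N"
  shows "(\<exists>m::int. (\<Sum>i<totient (p ^ N). poly_bernoulli_neg k (n + i)) = of_int m
            \<and> int p ^ N dvd m)
       \<and> (\<exists>m::int. (\<Sum>i<totient (p ^ N). poly_bernoulli_neg (n + i) k) = of_int m
            \<and> int p ^ N dvd m)"
proof -
  define M where "M = (\<Sum>m\<le>k. sc k m * (\<Sum>i<totient (p^N). int (Suc m)^(n+i)))"
  have dv: "int p ^ N dvd M" unfolding M_def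
    by (rule dvd_sum) (rule term_dvd[OF assms])
  have e1: "(\<Sum>i<totient (p ^ N). poly_bernoulli_neg k (n + i)) = of_int M"
    unfolding formula2 M_def
    by (simp add: sum_distrib_left sum.swap[where A="{..<totient (p^N)}"])
  have e2: "(\<Sum>i<totient (p ^ N). poly_bernoulli_neg (n + i) k) = of_int M"
    unfolding formula1 M_def
    by (simp add: sum_distrib_left sum.swap[where A="{..<totient (p^N)}"] mult.commute)
  show ?thesis using dv e1 e2 by blast
qed

end
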